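(* Let $R$ be a commutative ring with identity. If $\gamma_t(\Gamma(R))=3$, then $\gamma(\Gamma(R))=3$.
   Context: All rings are commutative with identity. The zero-divisor graph $\Gamma(R)$ has vertex set $Z(R)^*$ (nonzero zero-divisors); distinct $r,s$ are adjacent iff $rs=0$, and $x$ is adjacent to itself iff $x^2=0$. A dominating set is $X\subseteq Z(R)^*$ such that every vertex not in $X$ is adjacent to some element of $X$; a total dominating set is $X$ such that every vertex (including those in $X$) is adjacent to some element of $X$ (self-adjacency counts). $\gamma,\gamma_t$ are the respective minimum cardinalities. *)

theory Defs
  imports Main "HOL-Library.Extended_Nat"
begin

text \<open>Nonzero zero-divisors Z(R)* of a commutative ring with identity (vertex set of the zero-divisor graph).\<close>
definition zd_star :: "'a::comm_ring_1 set" where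
  "zd_star = {x. x \<noteq> 0 \<and> (\<exists>y. y \<noteq> 0 \<and> x * y = 0)}"

text \<open>Adjacency in the zero-divisor graph: distinct r, s adjacent iff rs = 0; x adjacent to itself iff x^2 = 0.\<close>
definition zd_adj :: "'a::comm_ring_1 \<Rightarrow> 'a \<Rightarrow> bool" where
  "zd_adj r s \<longleftrightarrow> r \<in> zd_star \<and> s \<in> zd_star \<and> r * s = 0"

definition zd_dominating :: "'a::comm_ring_1 set \<Rightarrow> bool" where
  "zd_dominating X \<longleftrightarrow> X \<subseteq> zd_star \<and> (\<forall>v \<in> zd_star - X. \<exists>x \<in> X. zd_adj v x)"

definition zd_total_dominating :: "'a::comm_ring_1 set \<Rightarrow> bool" where
  "zd_total_dominating X \<longleftrightarrow> X \<subseteq> zd_star \<and> (\<forall>v \<in> zd_star. \<exists>x \<in> X. zd_adj v x)"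

definition ecard :: "'b set \<Rightarrow> enat" where
  "ecard X = (if finite X then enat (card X) else \<infinity>)"

definition zd_gamma :: "'a::comm_ring_1 itself \<Rightarrow> enat" where
  "zd_gamma _ = Inf (ecard ` {X :: 'a set. zd_dominating X})"

definition zd_gamma_t :: "'a::comm_ring_1 itself \<Rightarrow> enat" where
  "zd_gamma_t _ = Inf (ecard ` {X :: 'a set. zd_total_dominating X})"

end

theory Submission
  imports Defs
begin

lemma zd_starI: "(x::'a::comm_ring_1) \<noteq> 0 \<Longrightarrow> y \<noteq> 0 \<Longrightarrow> x * y = 0 \<Longrightarrow> x \<in> zd_star"
  unfolding zd_star_def by blast

lemma zd_starE:
  assumes "(x::'a::comm_ring_1) \<in> zd_star" and "\<And>y. y \<in> zd_star \<Longrightarrow> x * y = 0 \<Longrightarrow> P"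
  shows P
proof -
  from assms(1) obtain y where y: "y \<noteq> 0" "x * y = 0" and x: "x \<noteq> 0" unfolding zd_star_def by blast
  have "y * x = 0" using y(2) by (simp add: mult.commute)
  then have "y \<in> zd_star" by (rule zd_starI[OF y(1) x])
  then show P using assms(2) y(2) by blast
qed

lemma zd_star_nz: "x \<in> zd_star \<Longrightarrow> x \<noteq> 0"
  unfolding zd_star_def by blast

lemma tdI: "Y \<subseteq> zd_star \<Longrightarrow> (\<And>v. v \<in> zd_star \<Longrightarrow> \<exists>x\<in>Y. v * x = 0) \<Longrightarrow> zd_total_dominating Y"
  unfolding zd_total_dominating_def zd_adj_def by blast

lemma two_td:
  assumes "zd_total_dominating {x, y :: 'a::comm_ring_1}"
  shows "\<exists>Y :: 'a set. zd_total_dominating Y \<and> finite Y \<and> card Y \<le> 2"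
proof -
  have "card {x, y} \<le> 2" by (cases "x = y") simp_all
  moreover have "finite {x, y}" by simp
  ultimately show ?thesis using assms by blast
qed

lemma key:
  fixes a b :: "'a::comm_ring_1"
  assumes a: "a \<in> zd_star" and b: "b \<in> zd_star"
    and dom: "\<forall>v\<in>zd_star. v = a \<or> v = b \<or> v * a = 0 \<or> v * b = 0"
  shows "\<exists>Y :: 'a set. zd_total_dominating Y \<and> finite Y \<and> card Y \<le> 2"
proof (cases "a * b = 0")
  case True
  have "zd_total_dominating {a, b}"
  proof (rule tdI)
    show "{a, b} \<subseteq> zd_star" using a b by auto
    fix v :: 'a assume v: "v \<in> zd_star"
    have ba: "b * a = 0" using True by (simp add: mult.commute)
    show "\<exists>x\<in>{a, b}. v * x = 0"
    proof (cases "v = a \<or> v = b")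
      case True then show ?thesis using ba \<open>a * b = 0\<close> by auto
    next
      case False then show ?thesis using dom v by blast
    qed
  qed
  then show ?thesis by (rule two_td)
next
  case False
  define c where "c = a * b"
  have c0: "c \<noteq> 0" using False c_def by simp
  obtain y where y: "y \<in> zd_star" "a * y = 0" using a by (rule zd_starE)
  have cz: "c \<in> zd_star"
    by (rule zd_starI[OF c0 zd_star_nz[OF y(1)]]) (metis c_def mult.assoc mult.left_commute mult_zero_right y(2))
  have cS: "\<And>v. v \<in> zd_star \<Longrightarrow> v \<noteq> a \<Longrightarrow> v \<noteq> b \<Longrightarrow> c * v = 0"
  proof -
    fix v assume "v \<in> zd_star" "v \<noteq> a" "v \<noteq> b"
    then have "v * a = 0 \<or> v * b = 0" using dom by blast
    moreover have "c * v = b * (v * a)" "c * v = a * (v * b)" unfolding c_def by (simp_all only: mult_ac)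
    ultimately show "c * v = 0" by (metis mult_zero_right)
  qed
  obtain wb where wb: "wb \<in> zd_star" "b * wb = 0" using b by (rule zd_starE)
  obtain wa where wa: "wa \<in> zd_star" "a * wa = 0" using a by (rule zd_starE)
  consider "c = a" | "c = b" | "c \<noteq> a" "c \<noteq> b" by blast
  then show ?thesis
  proof cases
    case 1
    have "wb \<noteq> a"
    proof
      assume "wb = a" then have "a * b = 0" using wb(2) by (simp add: mult.commute)
      with False show False by simp
    qed
    moreover have "wb \<noteq> b"
    proof
      assume "wb = b"
      have ab: "a * b = a" using 1 c_def by simp
      have "a * (b * b) = (a * b) * b" by (simp only: mult.assoc)
      also have "\<dots> = a" by (simp only: ab)
      finally have "a = a * (b * b)" by simp
      moreover have "b * b = 0" using wb(2) \<open>wb = b\<close> by simp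
      ultimately show False using zd_star_nz[OF a] by simp
    qed
    moreover have awb: "a * wb = 0"
    proof -
      have ab: "a * b = a" using 1 c_def by simp
      have "a * wb = (a * b) * wb" by (simp only: ab)
      also have "\<dots> = a * (b * wb)" by (simp only: mult.assoc)
      finally show ?thesis using wb(2) by simp
    qed
    ultimately have nn: "wb \<noteq> a" "wb \<noteq> b" by blast+
    have "zd_total_dominating {a, wb}"
    proof (intro tdI)
      show "{a, wb} \<subseteq> zd_star" using a wb by auto
      fix v :: 'a assume v: "v \<in> zd_star"
      show "\<exists>x\<in>{a, wb}. v * x = 0"
      proof (cases "v = a \<or> v = b \<or> v = c")
        case True then show ?thesis using awb wb(2) 1 by auto
      next
        case False then have "c * v = 0" using cS v by blast
        then have "v * a = 0" using 1 by (simp add: mult.commute)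
        then show ?thesis by auto
      qed
    qed
    then show ?thesis by (rule two_td)
  next
    case 2
    have "wa \<noteq> b"
    proof
      assume "wa = b" then have "a * b = 0" using wa(2) by simp
      with False show False by simp
    qed
    moreover have "wa \<noteq> a"
    proof
      assume "wa = a"
      have ab: "a * b = b" using 2 c_def by simp
      have "(a * a) * b = a * (a * b)" by (simp only: mult.assoc)
      also have "\<dots> = b" by (simp only: ab)
      finally have "b = (a * a) * b" by simp
      moreover have "a * a = 0" using wa(2) \<open>wa = a\<close> by simp
      ultimately show False using zd_star_nz[OF b] by simp
    qed
    moreover have bwa: "b * wa = 0"
    proof -
      have ab: "a * b = b" using 2 c_def by simp
      have "b * wa = (a * b) * wa" by (simp only: ab)
      also have "\<dots> = b * (a * wa)" by (simp only: mult_ac)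
      finally show ?thesis using wa(2) by simp
    qed
    ultimately have nn: "wa \<noteq> a" "wa \<noteq> b" by blast+
    have "zd_total_dominating {b, wa}"
    proof (intro tdI)
      show "{b, wa} \<subseteq> zd_star" using b wa by auto
      fix v :: 'a assume v: "v \<in> zd_star"
      show "\<exists>x\<in>{b, wa}. v * x = 0"
      proof (cases "v = a \<or> v = b \<or> v = c")
        case True then show ?thesis using bwa wa(2) 2 by auto
      next
        case False then have "c * v = 0" using cS v by blast
        then have "v * b = 0" using 2 by (simp add: mult.commute)
        then show ?thesis by auto
      qed
    qed
    then show ?thesis by (rule two_td)
  next
    case 3
    have cc: "c * c = 0" using cS[OF cz 3] .
    have "c * a = 0 \<or> c * b = 0" using dom cz 3 by blast
    then show ?thesis
    proof
      assume ca: "c * a = 0"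
      have "zd_total_dominating {c, wb}"
    proof (intro tdI)
      show "{c, wb} \<subseteq> zd_star" using cz wb by auto
      fix v :: 'a assume v: "v \<in> zd_star"
      show "\<exists>x\<in>{c, wb}. v * x = 0"
      proof (cases "v = a \<or> v = b \<or> v = c")
        case True
        have "a * c = 0" using ca by (simp add: mult.commute)
        with True show ?thesis using wb(2) cc by auto
      next
        case False then have "c * v = 0" using cS v by blast
        then have "v * c = 0" by (simp add: mult.commute)
        then show ?thesis by auto
      qed
    qed
      then show ?thesis by (rule two_td)
    next
      assume cb: "c * b = 0"
      have "zd_total_dominating {c, wa}"
    proof (intro tdI)
      show "{c, wa} \<subseteq> zd_star" using cz wa by auto
      fix v :: 'a assume v: "v \<in> zd_star"
      show "\<exists>x\<in>{c, wa}. v * x = 0"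
      proof (cases "v = a \<or> v = b \<or> v = c")
        case True
        have "b * c = 0" using cb by (simp add: mult.commute)
        with True show ?thesis using wa(2) cc by auto
      next
        case False then have "c * v = 0" using cS v by blast
        then have "v * c = 0" by (simp add: mult.commute)
        then show ?thesis by auto
      qed
    qed
      then show ?thesis by (rule two_td)
    qed
  qed
qed

theorem proposition4p1:
  assumes "zd_gamma_t TYPE('a::comm_ring_1) = 3"
  shows "zd_gamma TYPE('a) = 3"
proof -
  let ?T = "{X :: 'a set. zd_total_dominating X}"
  let ?D = "{X :: 'a set. zd_dominating X}"
  have eq: "Inf (ecard ` ?T) = 3" using assms unfolding zd_gamma_t_def .
  have ne: "ecard ` ?T \<noteq> {}"
  proof
    assume "ecard ` ?T = {}"
    then have "Inf (ecard ` ?T) = \<infinity>" by (simp add: Inf_enat_def)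
    then show False using eq by simp
  qed
  then obtain z where z: "z \<in> ecard ` ?T" by blast
  have inf_eq: "Inf (ecard ` ?T) = (LEAST x. x \<in> ecard ` ?T)" by (simp only: Inf_enat_def if_not_P[OF ne])
  have "Inf (ecard ` ?T) \<in> ecard ` ?T" unfolding inf_eq using z by (rule LeastI)
  then have "3 \<in> ecard ` ?T" by (simp only: eq)
  then obtain X0 :: "'a set" where "3 = ecard X0" "X0 \<in> ?T" by (rule imageE)
  then have X0: "zd_total_dominating X0" "ecard X0 = 3" by simp_all
  have low: "3 \<le> ecard Y" if "zd_total_dominating Y" for Y :: "'a set"
  proof -
    have "Inf (ecard ` ?T) \<le> ecard Y" by (rule Inf_lower) (use that in blast)
    then show ?thesis using eq by simp
  qed
  have "zd_dominating X0" using X0(1) unfolding zd_dominating_def zd_total_dominating_def by blast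
  then have "Inf (ecard ` ?D) \<le> ecard X0" by (intro Inf_lower) blast
  then have le: "Inf (ecard ` ?D) \<le> 3" using X0(2) by simp
  have ge: "3 \<le> ecard X" if X: "zd_dominating X" for X :: "'a set"
  proof (rule ccontr)
    assume n3: "\<not> 3 \<le> ecard X"
    have fin: "finite X"
    proof (rule ccontr)
      assume "infinite X" then have "ecard X = \<infinity>" unfolding ecard_def by simp
      with n3 show False by simp
    qed
    then have "ecard X = enat (card X)" unfolding ecard_def by simp
    with n3 have "\<not> 3 \<le> card X" by (simp add: numeral_eq_enat)
    then have cX: "card X \<le> 2" by simp
    have sub: "X \<subseteq> zd_star" and dm: "\<forall>v\<in>zd_star - X. \<exists>x\<in>X. v * x = 0"
      using X unfolding zd_dominating_def zd_adj_def by auto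
    have "\<exists>Y :: 'a set. zd_total_dominating Y \<and> finite Y \<and> card Y \<le> 2"
    proof -
      consider (c0) "card X = 0" | (c1) "card X = 1" | (c2) "card X = 2" using cX by linarith
      then show ?thesis
      proof cases
        case c0
        then have X0e: "X = {}" using fin by simp
        have "zd_total_dominating ({} :: 'a set)"
          unfolding zd_total_dominating_def using dm X0e by simp
        moreover have "finite ({} :: 'a set)" "card ({} :: 'a set) \<le> 2" by simp_all
        ultimately show ?thesis by blast
      next
        case c1
        then obtain a where Xa: "X = {a}" by (rule card_1_singletonE)
        show ?thesis by (rule key[of a a]) (use sub dm Xa in auto)
      next
        case c2
        then obtain a b where Xab: "X = {a, b}" by (meson card_2_iff)
        show ?thesis by (rule key[of a b]) (use sub dm Xab in auto)
      qed
    qed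
    then obtain Y :: "'a set" where Y: "zd_total_dominating Y" "finite Y" "card Y \<le> 2" by blast
    have "ecard Y = enat (card Y)" using Y(2) unfolding ecard_def by simp
    then have "ecard Y < 3" using Y(3) by (simp add: numeral_eq_enat)
    with low[OF Y(1)] show False by simp
  qed
  have "3 \<le> Inf (ecard ` ?D)" by (rule Inf_greatest) (use ge in blast)
  with le show ?thesis unfolding zd_gamma_def by (rule antisym)
qed

end
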